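(* Assume $\alpha>0$, $\beta>0$, $\mu_N>0$ and $N\ge2$ fixed. The continuous-time Markov chain $y(t)$ on $\Gamma$ is ergodic: it has a unique stationary distribution $\pi$ on $\Gamma$, and there exist constants $C_1,C_2>0$ such that for all $t\ge0$ and every initial distribution of $y(0)$, $$\sum_{y\in\Gamma}|\mathbf P(y(t)=y)-\pi(y)|\le C_1e^{-C_2t}.$$
   Context: Particle system: $x(t)=(x_1(t),\dots,x_N(t))$ is the continuous-time Markov chain on $\mathbf Z^N$ in which each particle independently jumps $+1$ at rate $\alpha$ and $-1$ at rate $\beta$, and for each ordered pair $(i,j)$, $j\ne i$, at rate $\mu_N/N$ particle $i$ is moved to position $x_j$ if $x_i>x_j$ (generator $G_Ng(x)=\sum_i[\alpha(g(x+e_i)-g(x))+\beta(g(x-e_i)-g(x))]+\sum_i\sum_{j\ne i}(g(x-(x_i-x_j)e_i)-g(x))\mathbf 1\{x_i>x_j\}\mu_N/N$). Relative coordinates: $y_i(t)=x_i(t)-\min_j x_j(t)$, $y(t)=(y_1(t),\dots,y_N(t))$, which is a Markov chain on $\Gamma=\bigcup_k\Gamma_k\subset\mathbf Z_+^N$, $\Gamma_k=\{z\in\mathbf Z_+^N: z_k=0\}$. *)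

theory Defs
  imports "HOL-Analysis.Analysis"
begin

text \<open>Configurations of the particle system are lists of integers of length N
 (entry i is the position of particle i).\<close>

definition rel :: "int list \<Rightarrow> int list" where
  "rel x = map (\<lambda>a. a - Min (set x)) x"

definition Gamma :: "nat \<Rightarrow> int list set" where
  "Gamma N = {z. length z = N \<and> (\<forall>a\<in>set z. 0 \<le> a) \<and> 0 \<in> set z}"

text \<open>The elementary transitions (rate, target) of the x-chain from configuration x,
 exactly as in the generator G_N: particle i jumps +1 at rate alpha, -1 at rate beta,
 and for j \<noteq> i it is moved to x_j at rate mu/N if x_i > x_j
 (x - (x_i - x_j) e_i = x[i := x_j]).\<close>
definition trans :: "nat \<Rightarrow> real \<Rightarrow> real \<Rightarrow> real \<Rightarrow> int list \<Rightarrow> (real \<times> int list) list" where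
  "trans N \<alpha> \<beta> \<mu> x =
     concat (map (\<lambda>i. [(\<alpha>, x[i := x ! i + 1]), (\<beta>, x[i := x ! i - 1])] @
        map (\<lambda>j. (\<mu> / real N, x[i := x ! j]))
            (filter (\<lambda>j. j \<noteq> i \<and> x ! i > x ! j) [0..<N])) [0..<N])"

text \<open>Generator (Q-matrix) of the relative-coordinate chain y(t) on Gamma, obtained
 from G_N: Q(y,y') = sum over transitions x \<rightarrow> x' of rate * (1[rel x' = y'] - 1[y' = y]).\<close>
definition Qy :: "nat \<Rightarrow> real \<Rightarrow> real \<Rightarrow> real \<Rightarrow> int list \<Rightarrow> int list \<Rightarrow> real" where
  "Qy N \<alpha> \<beta> \<mu> y y' =
     (\<Sum>(r, x')\<leftarrow>trans N \<alpha> \<beta> \<mu> y.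
        r * ((if rel x' = y' then 1 else 0) - (if y' = y then 1 else 0)))"

fun Qpow :: "nat \<Rightarrow> real \<Rightarrow> real \<Rightarrow> real \<Rightarrow> nat \<Rightarrow> int list \<Rightarrow> int list \<Rightarrow> real" where
  "Qpow N \<alpha> \<beta> \<mu> 0 y y' = (if y = y' then 1 else 0)"
| "Qpow N \<alpha> \<beta> \<mu> (Suc n) y y' =
     (\<Sum>\<^sub>\<infinity>z\<in>Gamma N. Qpow N \<alpha> \<beta> \<mu> n y z * Qy N \<alpha> \<beta> \<mu> z y')"

text \<open>Transition function P_t = exp(t Q) (Q is bounded: total exit rates are bounded).\<close>
definition Pt :: "nat \<Rightarrow> real \<Rightarrow> real \<Rightarrow> real \<Rightarrow> real \<Rightarrow> int list \<Rightarrow> int list \<Rightarrow> real" where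
  "Pt N \<alpha> \<beta> \<mu> t y y' = (\<Sum>n. t ^ n / fact n * Qpow N \<alpha> \<beta> \<mu> n y y')"

text \<open>Probability distributions on Gamma (as weight functions; values outside Gamma irrelevant).\<close>
definition is_distr :: "nat \<Rightarrow> (int list \<Rightarrow> real) \<Rightarrow> bool" where
  "is_distr N p \<longleftrightarrow> (\<forall>y\<in>Gamma N. 0 \<le> p y) \<and> (p has_sum 1) (Gamma N)"

text \<open>Law of y(t), i.e. P(y(t) = y'), when y(0) has distribution p.\<close>
definition law :: "nat \<Rightarrow> real \<Rightarrow> real \<Rightarrow> real \<Rightarrow> real \<Rightarrow> (int list \<Rightarrow> real) \<Rightarrow> int list \<Rightarrow> real" where
  "law N \<alpha> \<beta> \<mu> t p y' = (\<Sum>\<^sub>\<infinity>y\<in>Gamma N. p y * Pt N \<alpha> \<beta> \<mu> t y y')"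

definition stationary :: "nat \<Rightarrow> real \<Rightarrow> real \<Rightarrow> real \<Rightarrow> (int list \<Rightarrow> real) \<Rightarrow> bool" where
  "stationary N \<alpha> \<beta> \<mu> \<pi> \<longleftrightarrow> is_distr N \<pi> \<and>
     (\<forall>t\<ge>0. \<forall>y\<in>Gamma N. law N \<alpha> \<beta> \<mu> t \<pi> y = \<pi> y)"

end

theory Submission
  imports Defs
begin


definition app :: "'a set \<Rightarrow> ('a \<Rightarrow> 'a \<Rightarrow> real) \<Rightarrow> ('a \<Rightarrow> real) \<Rightarrow> 'a \<Rightarrow> real" where
  "app S M v z = (\<Sum>\<^sub>\<infinity>y\<in>S. v y * M y z)"

definition substoch :: "'a set \<Rightarrow> ('a \<Rightarrow> 'a \<Rightarrow> real) \<Rightarrow> real \<Rightarrow> bool" where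
  "substoch S M c \<longleftrightarrow> (\<forall>y\<in>S. \<forall>z\<in>S. M y z \<ge> 0) \<and> (\<forall>y\<in>S. (M y has_sum c) S)"

lemma substoch_le:
  assumes "substoch S M c" "y \<in> S" "z \<in> S" shows "M y z \<le> c"
proof -
  have "sum (M y) {z} \<le> c"
    using assms by (intro finite_sum_le_has_sum[where f="M y" and S=c and A=S]) (auto simp: substoch_def)
  then show ?thesis by simp
qed

lemma substoch_nonneg_c:
  assumes "substoch S M c" "y \<in> S" shows "0 \<le> c"
  using assms by (metis has_sum_nonneg substoch_def)

lemma abs_summable_real: "(v::'a\<Rightarrow>real) summable_on S \<Longrightarrow> (\<lambda>y. \<bar>v y\<bar>) summable_on S"
  using summable_on_iff_abs_summable_on_real[of v S] by simp

lemma summable_of_abs_real: "(\<lambda>y. norm (v y)) summable_on S \<Longrightarrow> (v::'a\<Rightarrow>real) summable_on S"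
  using summable_on_iff_abs_summable_on_real[of v S] by simp

lemma col_summable:
  assumes "substoch S M c" "v summable_on S" "z \<in> S"
  shows "(\<lambda>y. v y * M y z) summable_on S"
proof -
  have "(\<lambda>y. \<bar>v y\<bar> * c) summable_on S"
    using abs_summable_real[OF assms(2)] by (rule summable_on_cmult_left)
  then have "(\<lambda>y. norm (v y * M y z)) summable_on S"
  proof (rule Infinite_Sum.abs_summable_on_comparison_test')
    fix y assume "y \<in> S"
    then have "0 \<le> M y z" "M y z \<le> c" using assms substoch_le[OF assms(1)] by (auto simp: substoch_def)
    then show "norm (v y * M y z) \<le> \<bar>v y\<bar> * c"
      by (simp add: abs_mult mult_left_mono)
  qed
  then show ?thesis by (rule summable_of_abs_real)
qed

lemma prod_summable:
  assumes "substoch S M c" "v summable_on S"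
  shows "(\<lambda>(y,z). v y * M y z) summable_on (S \<times> S)"
proof -
  have "(\<lambda>x. norm ((\<lambda>(y,z). v y * M y z) x)) summable_on (Sigma S (\<lambda>_. S))"
  proof (subst Infinite_Sum.abs_summable_on_Sigma_iff, intro conjI ballI)
    fix y assume y: "y \<in> S"
    have "((\<lambda>z. \<bar>v y\<bar> * M y z) has_sum (\<bar>v y\<bar> * c)) S"
      using assms y by (intro has_sum_cmult_right) (auto simp: substoch_def)
    moreover have "\<And>z. z \<in> S \<Longrightarrow> norm (v y * M y z) = \<bar>v y\<bar> * M y z"
      using assms y by (auto simp: substoch_def abs_mult)
    ultimately have h: "((\<lambda>z. norm (v y * M y z)) has_sum (\<bar>v y\<bar> * c)) S"
      by (subst has_sum_cong) auto
    then show "(\<lambda>z. norm ((\<lambda>(y,z). v y * M y z) (y, z))) summable_on S"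
      by (auto simp: summable_on_def)
  next
    have "(\<lambda>y. \<bar>v y\<bar> * c) summable_on S"
      using abs_summable_real[OF assms(2)] by (rule summable_on_cmult_left)
    moreover have "\<And>y. y \<in> S \<Longrightarrow> (\<Sum>\<^sub>\<infinity>z\<in>S. norm ((\<lambda>(y,z). v y * M y z) (y, z))) = \<bar>v y\<bar> * c"
    proof -
      fix y assume y: "y \<in> S"
      have "((\<lambda>z. \<bar>v y\<bar> * M y z) has_sum (\<bar>v y\<bar> * c)) S"
        using assms y by (intro has_sum_cmult_right) (auto simp: substoch_def)
      moreover have "\<And>z. z \<in> S \<Longrightarrow> norm (v y * M y z) = \<bar>v y\<bar> * M y z"
        using assms y by (auto simp: substoch_def abs_mult)
      ultimately have h: "((\<lambda>z. norm (v y * M y z)) has_sum (\<bar>v y\<bar> * c)) S"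
        by (subst has_sum_cong) auto
      then show "(\<Sum>\<^sub>\<infinity>z\<in>S. norm ((\<lambda>(y,z). v y * M y z) (y, z))) = \<bar>v y\<bar> * c"
        by (simp add: infsumI)
    qed
    ultimately show "(\<lambda>y. norm (\<Sum>\<^sub>\<infinity>z\<in>S. norm ((\<lambda>(y,z). v y * M y z) (y, z)))) summable_on S"
      using assms substoch_nonneg_c[OF assms(1)] by (subst summable_on_cong[where g="\<lambda>y. \<bar>v y\<bar> * c"])
        (auto intro!: abs_summable_real simp: abs_mult)
  qed
  then show ?thesis by (rule summable_of_abs_real)
qed


lemma app_summable:
  assumes "substoch S M c" "v summable_on S"
  shows "app S M v summable_on S"
proof -
  have "(\<lambda>(z,y). v y * M y z) summable_on (S \<times> S)"
    using prod_summable[OF assms] by (subst summable_on_swap) (simp add: case_prod_unfold)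
  then show ?thesis unfolding app_def
    using summable_on_Sigma_banach[where f="\<lambda>z y. v y * M y z" and A=S and B="\<lambda>_. S"] by simp
qed

lemma app_sum:
  assumes "substoch S M c" "v summable_on S"
  shows "infsum (app S M v) S = c * infsum v S"
proof -
  have "infsum (app S M v) S = (\<Sum>\<^sub>\<infinity>z\<in>S. \<Sum>\<^sub>\<infinity>y\<in>S. v y * M y z)"
    by (simp add: app_def[abs_def])
  also have "\<dots> = (\<Sum>\<^sub>\<infinity>y\<in>S. \<Sum>\<^sub>\<infinity>z\<in>S. v y * M y z)"
    using prod_summable[OF assms]
    by (intro infsum_swap_banach[symmetric]) simp
  also have "\<dots> = (\<Sum>\<^sub>\<infinity>y\<in>S. v y * c)"
  proof (rule infsum_cong)
    fix y assume "y \<in> S"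
    then have "(M y has_sum c) S" using assms by (auto simp: substoch_def)
    then show "(\<Sum>\<^sub>\<infinity>z\<in>S. v y * M y z) = v y * c"
      by (simp add: infsumI has_sum_cmult_right)
  qed
  also have "\<dots> = c * infsum v S"
    by (simp add: infsum_cmult_right' mult.commute)
  finally show ?thesis .
qed

lemma app_abs_le:
  assumes "substoch S M c" "v summable_on S" "z \<in> S"
  shows "\<bar>app S M v z\<bar> \<le> app S M (\<lambda>y. \<bar>v y\<bar>) z"
proof -
  have s: "(\<lambda>y. v y * M y z) summable_on S" by (rule col_summable[OF assms])
  have "\<bar>app S M v z\<bar> \<le> (\<Sum>\<^sub>\<infinity>y\<in>S. norm (v y * M y z))"
    unfolding app_def using norm_infsum_bound[of "\<lambda>y. v y * M y z" S] abs_summable_real[OF s]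
    by simp
  also have "\<dots> = app S M (\<lambda>y. \<bar>v y\<bar>) z"
    unfolding app_def using assms by (intro infsum_cong) (auto simp: substoch_def abs_mult)
  finally show ?thesis .
qed

lemma app_nonneg:
  assumes "substoch S M c" "\<And>y. y \<in> S \<Longrightarrow> v y \<ge> 0" "z \<in> S"
  shows "app S M v z \<ge> 0"
  unfolding app_def using assms by (intro infsum_nonneg) (auto simp: substoch_def)

lemma app_norm:
  assumes "substoch S M c" "v summable_on S"
  shows "(\<lambda>z. \<bar>app S M v z\<bar>) summable_on S"
    and "(\<Sum>\<^sub>\<infinity>z\<in>S. \<bar>app S M v z\<bar>) \<le> c * (\<Sum>\<^sub>\<infinity>y\<in>S. \<bar>v y\<bar>)"
proof -
  have av: "(\<lambda>y. \<bar>v y\<bar>) summable_on S" by (rule abs_summable_real[OF assms(2)])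
  show "(\<lambda>z. \<bar>app S M v z\<bar>) summable_on S"
    by (rule abs_summable_real[OF app_summable[OF assms]])
  then have "(\<Sum>\<^sub>\<infinity>z\<in>S. \<bar>app S M v z\<bar>) \<le> infsum (app S M (\<lambda>y. \<bar>v y\<bar>)) S"
    using app_summable[OF assms(1) av] app_abs_le[OF assms] by (intro infsum_mono) auto
  also have "\<dots> = c * (\<Sum>\<^sub>\<infinity>y\<in>S. \<bar>v y\<bar>)"
    by (rule app_sum[OF assms(1) av])
  finally show "(\<Sum>\<^sub>\<infinity>z\<in>S. \<bar>app S M v z\<bar>) \<le> c * (\<Sum>\<^sub>\<infinity>y\<in>S. \<bar>v y\<bar>)" .
qed

lemma has_sum_diff':
  fixes f g :: "'a \<Rightarrow> real"
  assumes "(f has_sum a) A" "(g has_sum b) A"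
  shows "((\<lambda>x. f x - g x) has_sum (a - b)) A"
proof -
  have "((\<lambda>x. - g x) has_sum - b) A" using assms(2) by (simp add: has_sum_uminus)
  from has_sum_add[OF assms(1) this] show ?thesis by simp
qed

lemma infsum_diff':
  fixes f g :: "'a \<Rightarrow> real"
  assumes "f summable_on A" "g summable_on A"
  shows "(\<Sum>\<^sub>\<infinity>x\<in>A. f x - g x) = infsum f A - infsum g A"
  using has_sum_diff'[OF has_sum_infsum[OF assms(1)] has_sum_infsum[OF assms(2)]] by (rule infsumI)

lemma summable_on_diff':
  fixes f g :: "'a \<Rightarrow> real"
  assumes "f summable_on A" "g summable_on A"
  shows "(\<lambda>x. f x - g x) summable_on A"
  using has_sum_diff'[OF has_sum_infsum[OF assms(1)] has_sum_infsum[OF assms(2)]] by (auto simp: summable_on_def)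

lemma app_diff:
  assumes "substoch S M c" "v summable_on S" "u summable_on S" "z \<in> S"
  shows "app S M (\<lambda>y. v y - u y) z = app S M v z - app S M u z"
  unfolding app_def using col_summable[OF assms(1,2,4)] col_summable[OF assms(1,3,4)]
  by (simp add: left_diff_distrib infsum_diff')

lemma app_cong:
  assumes "\<And>y. y \<in> S \<Longrightarrow> v y = u y"
  shows "app S M v = app S M u"
  unfolding app_def using assms by (intro ext infsum_cong) auto

definition mmul :: "'a set \<Rightarrow> ('a \<Rightarrow> 'a \<Rightarrow> real) \<Rightarrow> ('a \<Rightarrow> 'a \<Rightarrow> real) \<Rightarrow> 'a \<Rightarrow> 'a \<Rightarrow> real" where
  "mmul S A B y y' = (\<Sum>\<^sub>\<infinity>z\<in>S. A y z * B z y')"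

lemma mmul_app: "mmul S A B y = app S B (A y)"
  by (auto simp: mmul_def app_def)

lemma substoch_mmul:
  assumes "substoch S A a" "substoch S B b"
  shows "substoch S (mmul S A B) (a * b)"
  unfolding substoch_def
proof (intro conjI ballI)
  fix y z assume "y \<in> S" "z \<in> S"
  then show "0 \<le> mmul S A B y z" unfolding mmul_app
    using assms by (intro app_nonneg) (auto simp: substoch_def)
next
  fix y assume y: "y \<in> S"
  then have hs: "(A y has_sum a) S" using assms by (auto simp: substoch_def)
  then have s: "A y summable_on S" by (auto simp: summable_on_def)
  have "(app S B (A y) has_sum (b * infsum (A y) S)) S"
    using app_summable[OF assms(2) s] app_sum[OF assms(2) s] by (metis has_sum_infsum)
  then show "(mmul S A B y has_sum a * b) S"
    using hs by (simp add: mmul_app infsumI mult.commute)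
qed

lemma app_mmul:
  assumes A: "substoch S A a" and B: "substoch S B b" and v: "v summable_on S" and z: "z \<in> S"
  shows "app S B (app S A v) z = app S (mmul S A B) v z"
proof -
  have av: "(\<lambda>y. \<bar>v y\<bar>) summable_on S" by (rule abs_summable_real[OF v])
  have P: "(\<lambda>x. (\<lambda>(y,w). \<bar>v y\<bar> * A y w) x * b) summable_on S \<times> S"
    by (rule summable_on_cmult_left[OF prod_summable[OF A av]])
  have "(\<lambda>x. norm ((\<lambda>(y,w). v y * A y w * B w z) x)) summable_on S \<times> S"
  proof (rule Infinite_Sum.abs_summable_on_comparison_test'[OF P])
    fix x assume "x \<in> S \<times> S"
    then obtain y w where x: "x = (y,w)" "y \<in> S" "w \<in> S" by auto
    have "0 \<le> A y w" "0 \<le> B w z" "B w z \<le> b"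
      using A B x z substoch_le[OF B] by (auto simp: substoch_def)
    then show "norm ((\<lambda>(y,w). v y * A y w * B w z) x) \<le> (\<lambda>(y,w). \<bar>v y\<bar> * A y w) x * b"
      using x by (simp add: abs_mult mult_left_mono mult_nonneg_nonneg)
  qed
  then have S1: "(\<lambda>(y,w). v y * A y w * B w z) summable_on S \<times> S"
    by (rule summable_of_abs_real)
  then have S2: "(\<lambda>(w,y). v y * A y w * B w z) summable_on S \<times> S"
    by (subst summable_on_swap) (simp add: case_prod_unfold)
  have "app S B (app S A v) z = (\<Sum>\<^sub>\<infinity>w\<in>S. (\<Sum>\<^sub>\<infinity>y\<in>S. v y * A y w) * B w z)"
    by (simp add: app_def)
  also have "\<dots> = (\<Sum>\<^sub>\<infinity>w\<in>S. \<Sum>\<^sub>\<infinity>y\<in>S. v y * A y w * B w z)"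
    by (simp add: infsum_cmult_left')
  also have "\<dots> = (\<Sum>\<^sub>\<infinity>y\<in>S. \<Sum>\<^sub>\<infinity>w\<in>S. v y * A y w * B w z)"
    using S2 by (intro infsum_swap_banach) simp
  also have "\<dots> = (\<Sum>\<^sub>\<infinity>y\<in>S. v y * (\<Sum>\<^sub>\<infinity>w\<in>S. A y w * B w z))"
    by (simp add: infsum_cmult_right'[symmetric] mult.assoc)
  also have "\<dots> = app S (mmul S A B) v z"
    by (simp add: app_def mmul_def)
  finally show ?thesis .
qed

lemma doeblin_contract:
  assumes M: "substoch S M 1" and y0: "y0 \<in> S" and eps: "\<And>y. y \<in> S \<Longrightarrow> M y y0 \<ge> \<epsilon>"
    and d: "d summable_on S" and d0: "infsum d S = 0"
  shows "(\<Sum>\<^sub>\<infinity>z\<in>S. \<bar>app S M d z\<bar>) \<le> (1 - \<epsilon>) * (\<Sum>\<^sub>\<infinity>y\<in>S. \<bar>d y\<bar>)"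
proof -
  define M' where "M' y z = M y z - (if z = y0 then \<epsilon> else 0)" for y z
  have dl: "((\<lambda>z. if z = y0 then \<epsilon> else 0) has_sum \<epsilon>) S"
    using y0 by (intro has_sum_finite_neutralI[where B="{y0}"]) auto
  have M': "substoch S M' (1 - \<epsilon>)"
    unfolding substoch_def
  proof (intro conjI ballI)
    fix y z assume "y \<in> S" "z \<in> S"
    then show "0 \<le> M' y z" using M eps by (auto simp: M'_def substoch_def)
  next
    fix y assume "y \<in> S"
    then have "(M y has_sum 1) S" using M by (auto simp: substoch_def)
    from has_sum_diff'[OF this dl] show "(M' y has_sum 1 - \<epsilon>) S"
      by (simp add: M'_def[abs_def])
  qed
  have eq: "app S M d z = app S M' d z" if z: "z \<in> S" for z
  proof -
    have "app S M d z = (\<Sum>\<^sub>\<infinity>y\<in>S. d y * M' y z + d y * (if z = y0 then \<epsilon> else 0))"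
      unfolding app_def by (intro infsum_cong) (simp add: M'_def algebra_simps)
    also have "\<dots> = app S M' d z + (\<Sum>\<^sub>\<infinity>y\<in>S. d y * (if z = y0 then \<epsilon> else 0))"
      unfolding app_def
      by (intro infsum_add col_summable[OF M' d z] summable_on_cmult_left d)
    also have "(\<Sum>\<^sub>\<infinity>y\<in>S. d y * (if z = y0 then \<epsilon> else 0)) = 0"
      using d0 by (simp add: infsum_cmult_left')
    finally show ?thesis by simp
  qed
  have "(\<Sum>\<^sub>\<infinity>z\<in>S. \<bar>app S M d z\<bar>) = (\<Sum>\<^sub>\<infinity>z\<in>S. \<bar>app S M' d z\<bar>)"
    using eq by (intro infsum_cong) simp
  also have "\<dots> \<le> (1 - \<epsilon>) * (\<Sum>\<^sub>\<infinity>y\<in>S. \<bar>d y\<bar>)"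
    by (rule app_norm(2)[OF M' d])
  finally show ?thesis .
qed


lemma sum_list_concat_map: "sum_list (map f (concat xss)) = sum_list (map (\<lambda>xs. sum_list (map f xs)) xss)"
  by (induction xss) auto

lemma rel_Gamma:
  assumes "length x = N" "N > 0"
  shows "rel x \<in> Gamma N"
proof -
  have ne: "set x \<noteq> {}" using assms by auto
  have "Min (set x) \<in> set x" using ne by simp
  then have "0 \<in> set (rel x)" unfolding rel_def by force
  moreover have "\<forall>a\<in>set (rel x). 0 \<le> a" unfolding rel_def using ne by auto
  ultimately show ?thesis using assms by (simp add: Gamma_def rel_def)
qed

lemma rel_id:
  assumes "z \<in> Gamma N"
  shows "rel z = z"
proof -
  have "Min (set z) = 0" using assms unfolding Gamma_def
    by (intro Min_eqI) auto
  then show ?thesis by (simp add: rel_def)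
qed

lemma sum_sum_list_swap:
  "(\<Sum>y\<in>F. sum_list (map (g y) L)) = sum_list (map (\<lambda>e. \<Sum>y\<in>F. g y e) L)"
  by (induction L) (auto simp: sum.distrib)

locale model =
  fixes N :: nat and \<alpha> \<beta> \<mu> :: real
  assumes alpha: "\<alpha> > 0" and beta: "\<beta> > 0" and mu: "\<mu> > 0" and N2: "N \<ge> 2"
begin

abbreviation "G \<equiv> Gamma N"
abbreviation "L z \<equiv> trans N \<alpha> \<beta> \<mu> z"

definition "Rmax = real N * (\<alpha> + \<beta> + \<mu>)"
definition "Lam = Rmax + 1"

lemma Rmax_pos: "Rmax > 0" using alpha beta mu N2 by (simp add: Rmax_def)
lemma Lam_gt1: "Lam > 1" using Rmax_pos by (simp add: Lam_def)
lemma Lam_pos: "Lam > 0" using Lam_gt1 by simp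

lemma trans_mem:
  assumes "(r, x') \<in> set (L z)" "length z = N"
  shows "r \<ge> 0" "length x' = N"
  using assms alpha beta mu by (auto simp: trans_def)

lemma trans_rel:
  assumes "(r, x') \<in> set (L z)" "length z = N"
  shows "rel x' \<in> G"
  using trans_mem[OF assms] N2 by (intro rel_Gamma) auto

lemma rates_le: "sum_list (map fst (L z)) \<le> Rmax"
proof -
  have "sum_list (map fst (L z)) = (\<Sum>i\<leftarrow>[0..<N]. \<alpha> + \<beta> + \<mu> / real N *
      real (length (filter (\<lambda>j. j \<noteq> i \<and> z ! i > z ! j) [0..<N])))"
    unfolding trans_def sum_list_concat_map by (simp add: o_def sum_list_triv algebra_simps)
  also have "\<dots> = (\<Sum>i\<in>{0..<N}. \<alpha> + \<beta> + \<mu> / real N *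
      real (length (filter (\<lambda>j. j \<noteq> i \<and> z ! i > z ! j) [0..<N])))"
    by (simp add: sum_set_upt_conv_sum_list_nat[symmetric])
  also have "\<dots> \<le> (\<Sum>i\<in>{0..<N}. \<alpha> + \<beta> + \<mu>)"
  proof (rule sum_mono)
    fix i
    have "length (filter (\<lambda>j. j \<noteq> i \<and> z ! i > z ! j) [0..<N]) \<le> N"
      using length_filter_le[of _ "[0..<N]"] by simp
    then have "\<mu> / real N * real (length (filter (\<lambda>j. j \<noteq> i \<and> z ! i > z ! j) [0..<N])) \<le> \<mu> / real N * real N"
      using mu by (intro mult_left_mono) auto
    also have "\<dots> = \<mu>" using N2 by simp
    finally show "\<alpha> + \<beta> + \<mu> / real N * real (length (filter (\<lambda>j. j \<noteq> i \<and> z ! i > z ! j) [0..<N])) \<le> \<alpha> + \<beta> + \<mu>"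
      by simp
  qed
  also have "\<dots> = Rmax" by (simp add: Rmax_def)
  finally show ?thesis .
qed

lemma Gamma_len: "z \<in> G \<Longrightarrow> length z = N" by (simp add: Gamma_def)

lemma Qy_def': "Qy N \<alpha> \<beta> \<mu> z y' = sum_list (map (\<lambda>(r, x'). r * ((if rel x' = y' then 1 else 0) - (if y' = z then 1 else 0))) (L z))"
  by (simp add: Qy_def)

lemma Qy_offdiag:
  assumes "z \<in> G" "y' \<noteq> z"
  shows "Qy N \<alpha> \<beta> \<mu> z y' \<ge> 0"
  unfolding Qy_def' using assms trans_mem(1)[OF _ Gamma_len[OF assms(1)]]
  by (intro sum_list_nonneg) auto

lemma sum_list_neg: "sum_list (map (\<lambda>e. - f e) xs) = - sum_list (map f (xs::'b list)) " for f :: "'b \<Rightarrow> real"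
  by (induction xs) auto

lemma Qy_diag:
  assumes "z \<in> G"
  shows "Qy N \<alpha> \<beta> \<mu> z z \<ge> - Rmax"
proof -
  have "sum_list (map (\<lambda>e. - fst e) (L z)) \<le> Qy N \<alpha> \<beta> \<mu> z z"
    unfolding Qy_def' using trans_mem(1)[OF _ Gamma_len[OF assms(1)]]
    by (intro sum_list_mono) auto
  moreover have "sum_list (map (\<lambda>e. - fst e) (L z)) \<ge> - Rmax"
    using rates_le[of z] by (simp add: sum_list_neg)
  ultimately show ?thesis by linarith
qed

definition "Fz z = insert z ((\<lambda>e. rel (snd e)) ` set (L z))"

lemma Fz_fin: "finite (Fz z)" by (simp add: Fz_def)

lemma Fz_sub: "z \<in> G \<Longrightarrow> Fz z \<subseteq> G"
  unfolding Fz_def using trans_rel Gamma_len by auto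

lemma sum_list_zero: "(\<And>x. x \<in> set xs \<Longrightarrow> f x = 0) \<Longrightarrow> sum_list (map f xs) = (0::real)"
  by (induction xs) auto

lemma Qy_zero:
  assumes "y' \<notin> Fz z"
  shows "Qy N \<alpha> \<beta> \<mu> z y' = 0"
  unfolding Qy_def' using assms by (intro sum_list_zero) (force simp: Fz_def)

lemma Qy_sum:
  shows "(\<Sum>y'\<in>Fz z. Qy N \<alpha> \<beta> \<mu> z y') = 0"
proof -
  have "(\<Sum>y'\<in>Fz z. Qy N \<alpha> \<beta> \<mu> z y') = sum_list (map (\<lambda>e. \<Sum>y'\<in>Fz z.
      (\<lambda>(r, x'). r * ((if rel x' = y' then 1 else 0) - (if y' = z then 1 else 0))) e) (L z))"
    unfolding Qy_def' by (rule sum_sum_list_swap)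
  also have "\<dots> = 0"
  proof (intro sum_list_zero)
    fix e assume e0: "e \<in> set (L z)"
    obtain r x' where ee: "e = (r, x')" by (cases e)
    with e0 have e: "(r, x') \<in> set (L z)" by simp
    define a where "a = (\<Sum>y'\<in>Fz z. r * ((if rel x' = y' then 1 else 0) - (if y' = z then 1 else 0)))"
    have "a = 0"
    proof -
    have "rel x' \<in> Fz z" "z \<in> Fz z" using e by (force simp: Fz_def)+
    then show "a = 0" unfolding a_def sum_distrib_left[symmetric] sum_subtractf
      using Fz_fin[of z] by (simp add: sum.delta sum.delta')
    qed
    then show "(\<Sum>y'\<in>Fz z. (\<lambda>(r, x'). r * ((if rel x' = y' then 1 else 0) - (if y' = z then 1 else 0))) e) = 0"
      by (simp add: ee a_def)
  qed
  finally show ?thesis .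
qed

definition K :: "int list \<Rightarrow> int list \<Rightarrow> real" where
  "K z y' = (if z = y' then 1 else 0) + Qy N \<alpha> \<beta> \<mu> z y' / Lam"

lemma Qy_K: "Qy N \<alpha> \<beta> \<mu> z y' = Lam * (K z y' - (if z = y' then 1 else 0))"
  using Lam_pos by (simp add: K_def)

lemma K_diag: "z \<in> G \<Longrightarrow> K z z \<ge> 1 / Lam"
proof -
  assume z: "z \<in> G"
  have "Qy N \<alpha> \<beta> \<mu> z z / Lam \<ge> - Rmax / Lam"
    using Qy_diag[OF z] Lam_pos by (intro divide_right_mono) auto
  then have "K z z \<ge> 1 - Rmax / Lam" by (simp add: K_def)
  moreover have "1 - Rmax / Lam = 1 / Lam" using Lam_pos by (simp add: Lam_def field_simps)
  ultimately show ?thesis by simp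
qed

lemma K_substoch: "substoch G K 1"
  unfolding substoch_def
proof (intro conjI ballI)
  fix z y' assume z: "z \<in> G" and y': "y' \<in> G"
  show "0 \<le> K z y'"
  proof (cases "z = y'")
    case True
    then show ?thesis using K_diag[OF z] Lam_pos
      by (smt (verit) divide_pos_pos)
  next
    case False
    then show ?thesis using Qy_offdiag[OF z] Lam_pos by (simp add: K_def)
  qed
next
  fix z assume z: "z \<in> G"
  have h1: "((\<lambda>y'. if z = y' then 1 else 0) has_sum 1) G"
    using z by (intro has_sum_finite_neutralI[where B="{z}"]) auto
  have h2: "((\<lambda>y'. Qy N \<alpha> \<beta> \<mu> z y' / Lam) has_sum 0) G"
    using z Fz_sub[OF z] Qy_zero Fz_fin[of z]
    by (intro has_sum_finite_neutralI[where B="Fz z"]) (auto simp: sum_divide_distrib[symmetric] Qy_sum)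
  from has_sum_add[OF h1 h2] show "(K z has_sum 1) G" by (simp add: K_def[abs_def])
qed

lemma K_move:
  assumes z: "z \<in> G" and k: "k < N" and j: "j < N" "j \<noteq> k" and zj: "z ! j = 0" and zk: "z ! k > 0"
  shows "K z (z[k := 0]) \<ge> \<mu> / (real N * Lam)"
proof -
  let ?z' = "z[k := 0]"
  have len: "length z = N" by (rule Gamma_len[OF z])
  have ne: "?z' \<noteq> z" using zk k len by (metis less_irrefl nth_list_update_eq)
  have s1: "set ?z' \<subseteq> insert 0 (set z)" by (rule set_update_subset_insert)
  have s2: "0 \<in> set ?z'" using k len by (simp add: set_update_memI)
  have z'G: "?z' \<in> G" using z len s1 s2 unfolding Gamma_def by auto
  have m1: "(\<mu> / real N, z[k := z ! j]) \<in> set ([(\<alpha>, z[k := z ! k + 1]), (\<beta>, z[k := z ! k - 1])] @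
     map (\<lambda>j. (\<mu> / real N, z[k := z ! j])) (filter (\<lambda>j. j \<noteq> k \<and> z ! k > z ! j) [0..<N]))"
  proof -
    have "j \<in> set (filter (\<lambda>j. j \<noteq> k \<and> z ! k > z ! j) [0..<N])" using j zj zk by auto
    then have "(\<mu> / real N, z[k := z ! j]) \<in> set (map (\<lambda>j. (\<mu> / real N, z[k := z ! j])) (filter (\<lambda>j. j \<noteq> k \<and> z ! k > z ! j) [0..<N]))"
      by (simp only: set_map) (rule imageI)
    then show ?thesis by (simp only: set_append) (rule UnI2)
  qed
  have "(\<mu> / real N, z[k := z ! j]) \<in> set (L z)"
    unfolding trans_def set_concat set_map using k m1 by auto
  then have mem: "(\<mu> / real N, ?z') \<in> set (L z)" using zj by simp
  have "(\<lambda>(r, x'). r * ((if rel x' = ?z' then 1 else 0) - (if ?z' = z then 1 else 0))) (\<mu> / real N, ?z') = \<mu> / real N"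
    using rel_id[OF z'G] ne by simp
  then have "\<mu> / real N \<in> set (map (\<lambda>(r, x'). r * ((if rel x' = ?z' then 1 else 0) - (if ?z' = z then 1 else 0))) (L z))"
    using mem by force
  then have "\<mu> / real N \<le> Qy N \<alpha> \<beta> \<mu> z ?z'"
    unfolding Qy_def' using trans_mem(1)[OF _ len] ne
    by (intro member_le_sum_list) auto
  then have "\<mu> / real N / Lam \<le> Qy N \<alpha> \<beta> \<mu> z ?z' / Lam" using Lam_pos by (intro divide_right_mono) auto
  then show ?thesis using ne by (simp add: K_def)
qed

end


lemma exp_sums: "(\<lambda>n. (x::real)^n / fact n) sums exp x"
  using exp_converges[of x] by (simp add: divide_inverse_commute)

lemma has_sum_sum_fin:
  fixes f :: "'i \<Rightarrow> 'a \<Rightarrow> real"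
  assumes "finite I" "\<And>k. k \<in> I \<Longrightarrow> (f k has_sum s k) A"
  shows "((\<lambda>z. \<Sum>k\<in>I. f k z) has_sum (\<Sum>k\<in>I. s k)) A"
  using assms
proof (induction I rule: finite_induct)
  case empty then show ?case by simp
next
  case (insert k I)
  then show ?case by (simp add: has_sum_add)
qed

lemma pascal:
  fixes x y :: real and a :: "nat \<Rightarrow> real"
  shows "(\<Sum>k\<le>n. real (n choose k) * x^k * y^(n-k) * (x * a (Suc k) + y * a k)) =
         (\<Sum>k\<le>Suc n. real (Suc n choose k) * x^k * y^(Suc n - k) * a k)"
proof -
  define A where "A = (\<Sum>k\<le>n. real (n choose k) * x^(Suc k) * y^(n-k) * a (Suc k))"
  define B where "B = (\<Sum>k\<le>n. real (n choose Suc k) * x^(Suc k) * y^(n-k) * a (Suc k))"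
  have "(\<Sum>k\<le>Suc n. real (Suc n choose k) * x^k * y^(Suc n - k) * a k) =
        y^(Suc n) * a 0 + (\<Sum>k\<le>n. real (Suc n choose Suc k) * x^(Suc k) * y^(n - k) * a (Suc k))"
    by (subst sum.atMost_Suc_shift) simp
  also have "(\<Sum>k\<le>n. real (Suc n choose Suc k) * x^(Suc k) * y^(n - k) * a (Suc k)) = A + B"
    unfolding A_def B_def by (simp add: sum.distrib[symmetric] algebra_simps)
  finally have R: "(\<Sum>k\<le>Suc n. real (Suc n choose k) * x^k * y^(Suc n - k) * a k) = y^(Suc n) * a 0 + A + B"
    by simp
  have "(\<Sum>k\<le>n. real (n choose k) * x^k * y^(n-k) * (x * a (Suc k) + y * a k)) =
        A + (\<Sum>k\<le>n. real (n choose k) * x^k * y^(Suc n - k) * a k)"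
    unfolding A_def sum.distrib[symmetric]
  proof (intro sum.cong refl)
    fix k assume "k \<in> {..n}"
    then have "Suc n - k = Suc (n - k)" by auto
    then show "real (n choose k) * x^k * y^(n-k) * (x * a (Suc k) + y * a k) =
      real (n choose k) * x^(Suc k) * y^(n-k) * a (Suc k) + real (n choose k) * x^k * y^(Suc n - k) * a k"
      by (simp add: algebra_simps)
  qed
  also have "(\<Sum>k\<le>n. real (n choose k) * x^k * y^(Suc n - k) * a k) =
             (\<Sum>k\<le>Suc n. real (n choose k) * x^k * y^(Suc n - k) * a k)"
    by simp
  also have "\<dots> = y^(Suc n) * a 0 + B"
    unfolding B_def by (subst sum.atMost_Suc_shift) simp
  finally show ?thesis using R by simp
qed

context model
begin

definition Wp :: "nat \<Rightarrow> int list \<Rightarrow> int list \<Rightarrow> real" where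
  "Wp n = ((\<lambda>A. mmul G A K) ^^ n) (\<lambda>y y'. if y = y' then 1 else 0)"

lemma Wp_0: "Wp 0 = (\<lambda>y y'. if y = y' then 1 else 0)" by (simp add: Wp_def)
lemma Wp_Suc: "Wp (Suc n) = mmul G (Wp n) K" by (simp add: Wp_def)

lemma id_substoch: "substoch G (\<lambda>y y'. if y = y' then 1 else 0) 1"
  unfolding substoch_def
proof (intro conjI ballI)
  fix y assume "y \<in> G"
  then show "((\<lambda>y'. if y = y' then 1 else 0) has_sum 1) G"
    by (intro has_sum_finite_neutralI[where B="{y}"]) auto
qed auto

lemma Wp_substoch: "substoch G (Wp n) 1"
proof (induction n)
  case 0 then show ?case using id_substoch by (simp add: Wp_0)
next
  case (Suc n)
  then show ?case using substoch_mmul[OF Suc K_substoch] by (simp add: Wp_Suc)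
qed

lemma Wp_row_summable: "y \<in> G \<Longrightarrow> Wp k y summable_on G"
  using Wp_substoch[of k] by (auto simp: substoch_def summable_on_def)

lemma Wp_nonneg: "y \<in> G \<Longrightarrow> y' \<in> G \<Longrightarrow> 0 \<le> Wp k y y'"
  using Wp_substoch[of k] by (auto simp: substoch_def)

lemma Wp_le1: "y \<in> G \<Longrightarrow> y' \<in> G \<Longrightarrow> Wp k y y' \<le> 1"
  using substoch_le[OF Wp_substoch] by blast

lemma Wp_K_has_sum:
  assumes "y \<in> G" "y' \<in> G"
  shows "((\<lambda>z. Wp k y z * K z y') has_sum Wp (Suc k) y y') G"
proof -
  have "(\<lambda>z. Wp k y z * K z y') summable_on G"
    by (rule col_summable[OF K_substoch Wp_row_summable[OF assms(1)] assms(2)])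
  then show ?thesis by (simp add: Wp_Suc mmul_def)
qed

lemma Wp_Qy_has_sum:
  assumes "y \<in> G" "y' \<in> G"
  shows "((\<lambda>z. Wp k y z * Qy N \<alpha> \<beta> \<mu> z y') has_sum (Lam * (Wp (Suc k) y y' - Wp k y y'))) G"
proof -
  have h2: "((\<lambda>z. Wp k y z * (if z = y' then 1 else 0)) has_sum Wp k y y') G"
    using assms by (intro has_sum_finite_neutralI[where B="{y'}"]) auto
  have "((\<lambda>z. Lam * (Wp k y z * K z y' - Wp k y z * (if z = y' then 1 else 0))) has_sum
        (Lam * (Wp (Suc k) y y' - Wp k y y'))) G"
    by (intro has_sum_cmult_right has_sum_diff' Wp_K_has_sum assms h2)
  then show ?thesis by (simp add: Qy_K algebra_simps)
qed

definition cf :: "nat \<Rightarrow> nat \<Rightarrow> real" where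
  "cf n k = real (n choose k) * Lam^k * (-Lam)^(n-k)"

lemma Qpow_Wp:
  assumes "y \<in> G" "y' \<in> G"
  shows "Qpow N \<alpha> \<beta> \<mu> n y y' = (\<Sum>k\<le>n. cf n k * Wp k y y')"
  using assms(2)
proof (induction n arbitrary: y')
  case 0
  then show ?case by (simp add: Wp_0 cf_def)
next
  case (Suc n)
  have "Qpow N \<alpha> \<beta> \<mu> (Suc n) y y' = (\<Sum>\<^sub>\<infinity>z\<in>G. (\<Sum>k\<le>n. cf n k * Wp k y z) * Qy N \<alpha> \<beta> \<mu> z y')"
    unfolding Qpow.simps using Suc.IH by (intro infsum_cong) simp
  also have "\<dots> = (\<Sum>\<^sub>\<infinity>z\<in>G. \<Sum>k\<le>n. cf n k * (Wp k y z * Qy N \<alpha> \<beta> \<mu> z y'))"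
    by (intro infsum_cong) (simp add: sum_distrib_right mult.assoc)
  also have "\<dots> = (\<Sum>k\<le>n. cf n k * (Lam * (Wp (Suc k) y y' - Wp k y y')))"
    by (intro infsumI has_sum_sum_fin has_sum_cmult_right Wp_Qy_has_sum assms(1) Suc.prems) auto
  also have "\<dots> = (\<Sum>k\<le>n. real (n choose k) * Lam^k * (-Lam)^(n-k) * (Lam * Wp (Suc k) y y' + (-Lam) * Wp k y y'))"
    by (intro sum.cong refl) (simp add: cf_def algebra_simps)
  also have "\<dots> = (\<Sum>k\<le>Suc n. real (Suc n choose k) * Lam^k * (-Lam)^(Suc n - k) * Wp k y y')"
    by (rule pascal[of n Lam "-Lam" "\<lambda>k. Wp k y y'"])
  also have "\<dots> = (\<Sum>k\<le>Suc n. cf (Suc n) k * Wp k y y')"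
    by (simp add: cf_def)
  finally show ?case .
qed

definition gp :: "nat \<Rightarrow> int list \<Rightarrow> int list" where
  "gp k y = map (\<lambda>i. if i < k then 0 else y ! i) [0..<N]"

definition "o0 = replicate N (0::int)"
definition "cc = min (1 / Lam) (\<mu> / (real N * Lam))"

lemma cc_pos: "cc > 0" using Lam_pos mu N2 by (simp add: cc_def)
lemma cc_lt1: "cc < 1"
proof -
  have "cc \<le> 1 / Lam" by (simp add: cc_def)
  also have "\<dots> < 1" using Lam_gt1 by simp
  finally show ?thesis .
qed

lemma Gamma_zero: assumes "y \<in> G" obtains j where "j < N" "y ! j = 0"
  using assms unfolding Gamma_def by (metis (mono_tags, lifting) in_set_conv_nth mem_Collect_eq)

lemma Gamma_nonneg: "y \<in> G \<Longrightarrow> i < N \<Longrightarrow> y ! i \<ge> 0"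
  unfolding Gamma_def by auto

lemma gp_G: assumes y: "y \<in> G" shows "gp k y \<in> G"
proof -
  obtain j where j: "j < N" "y ! j = 0" using Gamma_zero[OF y] by blast
  have "gp k y ! j = 0" using j by (simp add: gp_def)
  then have "0 \<in> set (gp k y)" using j by (metis gp_def length_map length_upt minus_nat.diff_0 nth_mem)
  moreover have "\<forall>a\<in>set (gp k y). 0 \<le> a" using Gamma_nonneg[OF y] by (auto simp: gp_def)
  ultimately show ?thesis by (simp add: Gamma_def gp_def)
qed

lemma gp_0: "y \<in> G \<Longrightarrow> gp 0 y = y"
  using Gamma_len[of y] by (intro nth_equalityI) (auto simp: gp_def)

lemma gp_N: "gp N y = o0"
  by (intro nth_equalityI) (auto simp: gp_def o0_def)

lemma gp_step: assumes y: "y \<in> G" shows "K (gp k y) (gp (Suc k) y) \<ge> cc"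
proof (cases "k < N \<and> y ! k \<noteq> 0")
  case False
  then have "gp (Suc k) y = gp k y"
    by (intro nth_equalityI) (auto simp: gp_def less_Suc_eq)
  then show ?thesis using K_diag[OF gp_G[OF y, of k]] by (simp add: cc_def)
next
  case True
  then have k: "k < N" and yk: "y ! k > 0" using Gamma_nonneg[OF y, of k] by auto
  obtain j where j: "j < N" "y ! j = 0" using Gamma_zero[OF y] by blast
  have jk: "j \<noteq> k" using j yk by auto
  have eq: "gp (Suc k) y = (gp k y)[k := 0]"
    by (intro nth_equalityI) (auto simp: gp_def less_Suc_eq nth_list_update)
  have "K (gp k y) ((gp k y)[k := 0]) \<ge> \<mu> / (real N * Lam)"
    by (rule K_move[OF gp_G[OF y] k j(1) jk]) (use j k yk in \<open>auto simp: gp_def\<close>)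
  then show ?thesis unfolding eq by (simp add: cc_def)
qed

lemma Wp_path: assumes y: "y \<in> G" shows "Wp k y (gp k y) \<ge> cc ^ k"
proof (induction k)
  case 0 then show ?case by (simp add: Wp_0 gp_0[OF y])
next
  case (Suc k)
  let ?w = "gp (Suc k) y" and ?z = "gp k y"
  have hs: "((\<lambda>z. Wp k y z * K z ?w) has_sum Wp (Suc k) y ?w) G"
    by (rule Wp_K_has_sum[OF y gp_G[OF y]])
  have "sum (\<lambda>z. Wp k y z * K z ?w) {?z} \<le> Wp (Suc k) y ?w"
    using K_substoch gp_G[OF y] y
    by (intro finite_sum_le_has_sum[OF hs]) (auto simp: substoch_def intro!: mult_nonneg_nonneg Wp_nonneg)
  moreover have "cc ^ k * cc \<le> Wp k y ?z * K ?z ?w"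
    using Suc.IH gp_step[OF y, of k] cc_pos Wp_nonneg[OF y gp_G[OF y]] by (intro mult_mono) auto
  ultimately show ?case by (simp add: mult.commute)
qed

lemma Wp_doeblin: "y \<in> G \<Longrightarrow> Wp N y o0 \<ge> cc ^ N"
  using Wp_path[of y N] by (simp add: gp_N)

lemma o0_G: "o0 \<in> G"
  using N2 by (auto simp: o0_def Gamma_def)

lemma Pt_eq:
  assumes y: "y \<in> G" and y': "y' \<in> G"
  shows "summable (\<lambda>k. (Lam*t)^k / fact k * Wp k y y')"
    and "Pt N \<alpha> \<beta> \<mu> t y y' = exp (-(Lam*t)) * (\<Sum>k. (Lam*t)^k / fact k * Wp k y y')"
proof -
  define a where "a k = (Lam*t)^k / fact k * Wp k y y'" for k
  define b where "b k = (-(Lam*t))^k / fact k" for k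
  define g where "g k = \<bar>Lam*t\<bar>^k / fact k" for k
  have sg: "summable g" unfolding g_def using exp_sums sums_summable by blast
  have na: "summable (\<lambda>k. norm (a k))"
  proof (rule summable_comparison_test[OF _ sg], intro exI allI impI)
    fix k :: nat
    have "\<bar>Wp k y y'\<bar> \<le> 1" using Wp_nonneg[OF y y'] Wp_le1[OF y y'] by simp
    then have "(\<bar>Lam\<bar> * \<bar>t\<bar>) ^ k * \<bar>Wp k y y'\<bar> \<le> (\<bar>Lam\<bar> * \<bar>t\<bar>) ^ k"
      by (intro mult_left_le) auto
    then have "(\<bar>Lam\<bar> * \<bar>t\<bar>) ^ k * \<bar>Wp k y y'\<bar> / fact k \<le> (\<bar>Lam\<bar> * \<bar>t\<bar>) ^ k / fact k"
      by (intro divide_right_mono) auto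
    then show "norm (norm (a k)) \<le> g k"
      unfolding a_def g_def by (simp add: abs_mult power_abs)
  qed
  have nb: "summable (\<lambda>k. norm (b k))"
  proof (rule summable_comparison_test[OF _ sg], intro exI allI impI)
    fix k :: nat
    show "norm (norm (b k)) \<le> g k" unfolding b_def g_def by (simp add: power_abs)
  qed
  show "summable (\<lambda>k. (Lam*t)^k / fact k * Wp k y y')"
    using summable_norm_cancel[OF na] by (simp add: a_def)
  have C: "(\<lambda>k. \<Sum>i\<le>k. a i * b (k - i)) sums (suminf a * suminf b)"
    by (rule Cauchy_product_sums[OF na nb])
  have sb: "suminf b = exp (-(Lam*t))"
    unfolding b_def using exp_sums sums_unique by metis
  have eq: "(\<Sum>i\<le>k. a i * b (k - i)) = t^k / fact k * Qpow N \<alpha> \<beta> \<mu> k y y'" for k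
  proof -
    have "(\<Sum>i\<le>k. a i * b (k - i)) = (\<Sum>i\<le>k. t^k / fact k * (cf k i * Wp i y y'))"
    proof (intro sum.cong refl)
      fix i assume "i \<in> {..k}"
      then have ik: "i \<le> k" by simp
      have tk: "t^k = t^i * t^(k-i)" using ik by (simp add: power_add[symmetric])
      have "real (k choose i) = fact k / (fact i * fact (k - i))" using ik by (rule binomial_fact)
      then have bf: "fact k = fact i * fact (k - i) * real (k choose i)" by (simp add: field_simps)
      have cpos: "real (k choose i) > 0" using ik by simp
      have p1: "(Lam*t)^i = Lam^i * t^i" by (simp add: power_mult_distrib)
      have p2: "(-(Lam*t))^(k-i) = (-Lam)^(k-i) * t^(k-i)" by (simp add: power_mult_distrib[symmetric])
      show "a i * b (k - i) = t^k / fact k * (cf k i * Wp i y y')"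
        unfolding a_def b_def cf_def tk p1 p2 bf using cpos by (simp add: field_simps)
    qed
    also have "\<dots> = t^k / fact k * Qpow N \<alpha> \<beta> \<mu> k y y'"
      by (simp add: Qpow_Wp[OF y y'] sum_distrib_left)
    finally show ?thesis .
  qed
  have "(\<lambda>k. t^k / fact k * Qpow N \<alpha> \<beta> \<mu> k y y') sums (suminf a * exp (-(Lam*t)))"
    using C unfolding eq sb .
  then show "Pt N \<alpha> \<beta> \<mu> t y y' = exp (-(Lam*t)) * (\<Sum>k. (Lam*t)^k / fact k * Wp k y y')"
    unfolding Pt_def a_def by (simp add: sums_unique[symmetric] mult.commute)
qed

definition wt :: "real \<Rightarrow> nat \<Rightarrow> real" where
  "wt t k = exp (-(Lam*t)) * ((Lam*t)^k / fact k)"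

lemma wt_nonneg: "t \<ge> 0 \<Longrightarrow> wt t k \<ge> 0"
  using Lam_pos by (simp add: wt_def)

lemma wt_has_sum: assumes "t \<ge> 0" shows "(wt t has_sum 1) UNIV"
proof -
  have "(\<lambda>k. exp (-(Lam*t)) * ((Lam*t)^k / fact k)) sums (exp (-(Lam*t)) * exp (Lam*t))"
    by (intro sums_mult exp_sums)
  then have "wt t sums 1" by (simp add: wt_def[abs_def] exp_minus_inverse mult.commute)
  then show ?thesis using wt_nonneg[OF assms] by (intro sums_nonneg_imp_has_sum) auto
qed

lemma Pt_has_sum:
  assumes t: "t \<ge> 0" and y: "y \<in> G" and y': "y' \<in> G"
  shows "((\<lambda>k. wt t k * Wp k y y') has_sum Pt N \<alpha> \<beta> \<mu> t y y') UNIV"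
proof -
  have "(\<lambda>k. exp (-(Lam*t)) * ((Lam*t)^k / fact k * Wp k y y')) sums (exp (-(Lam*t)) * (\<Sum>k. (Lam*t)^k / fact k * Wp k y y'))"
    by (intro sums_mult summable_sums Pt_eq(1)[OF y y'])
  then have "(\<lambda>k. wt t k * Wp k y y') sums Pt N \<alpha> \<beta> \<mu> t y y'"
    unfolding Pt_eq(2)[OF y y'] by (simp add: wt_def mult.assoc)
  then show ?thesis
    using wt_nonneg[OF t] Wp_nonneg[OF y y'] by (intro sums_nonneg_imp_has_sum) auto
qed

lemma Pt_nonneg: "t \<ge> 0 \<Longrightarrow> y \<in> G \<Longrightarrow> y' \<in> G \<Longrightarrow> Pt N \<alpha> \<beta> \<mu> t y y' \<ge> 0"
  using Pt_has_sum wt_nonneg Wp_nonneg by (meson has_sum_nonneg mult_nonneg_nonneg)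

lemma Pt_le1: assumes "t \<ge> 0" "y \<in> G" "y' \<in> G" shows "Pt N \<alpha> \<beta> \<mu> t y y' \<le> 1"
  using assms wt_nonneg Wp_le1
  by (intro has_sum_mono[OF Pt_has_sum[OF assms] wt_has_sum[OF assms(1)]]) (simp add: mult_left_le)

end


lemma single_le:
  fixes f :: "'a \<Rightarrow> real"
  assumes "f summable_on S" "y \<in> S"
  shows "\<bar>f y\<bar> \<le> (\<Sum>\<^sub>\<infinity>x\<in>S. \<bar>f x\<bar>)"
proof -
  have "sum (\<lambda>x. \<bar>f x\<bar>) {y} \<le> (\<Sum>\<^sub>\<infinity>x\<in>S. \<bar>f x\<bar>)"
    using assms by (intro finite_sum_le_infsum abs_summable_real) auto
  then show ?thesis by simp
qed

lemma lim_zero: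
  fixes c C r :: real
  assumes r: "r < 1" and b: "\<And>q. \<bar>c\<bar> \<le> C * r ^ q"
  shows "c = 0"
proof (rule ccontr)
  assume "c \<noteq> 0"
  then have c: "\<bar>c\<bar> > 0" by simp
  then have C: "C > 0" using b[of 0] by simp
  obtain q where "r ^ q < \<bar>c\<bar> / C" using real_arch_pow_inv[OF divide_pos_pos[OF c C] r] by blast
  then have "C * r ^ q < \<bar>c\<bar>" using C by (simp add: field_simps)
  then show False using b[of q] by simp
qed

context model
begin

definition T :: "(int list \<Rightarrow> real) \<Rightarrow> int list \<Rightarrow> real" where
  "T v = app G K v"

definition "eps = cc ^ N"
definition "rho = 1 - eps"

lemma eps_pos: "eps > 0" using cc_pos by (simp add: eps_def)
lemma eps_lt1: "eps < 1"
  using cc_pos cc_lt1 N2 unfolding eps_def by (simp add: power_less_one_iff)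
lemma rho_pos: "rho > 0" using eps_lt1 by (simp add: rho_def)
lemma rho_lt1: "rho < 1" using eps_pos by (simp add: rho_def)

lemma T_summable: "v summable_on G \<Longrightarrow> T v summable_on G"
  unfolding T_def by (rule app_summable[OF K_substoch])

lemma Tn_summable: "v summable_on G \<Longrightarrow> (T ^^ n) v summable_on G"
  by (induction n) (auto intro: T_summable)

lemma T_sum: "v summable_on G \<Longrightarrow> infsum (T v) G = infsum v G"
  unfolding T_def using app_sum[OF K_substoch] by simp

lemma Tn_sum: "v summable_on G \<Longrightarrow> infsum ((T ^^ n) v) G = infsum v G"
  by (induction n) (auto simp: T_sum Tn_summable)

lemma T_nonexp: "v summable_on G \<Longrightarrow> (\<Sum>\<^sub>\<infinity>y\<in>G. \<bar>T v y\<bar>) \<le> (\<Sum>\<^sub>\<infinity>y\<in>G. \<bar>v y\<bar>)"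
  unfolding T_def using app_norm(2)[OF K_substoch] by fastforce

lemma Tn_nonexp: "v summable_on G \<Longrightarrow> (\<Sum>\<^sub>\<infinity>y\<in>G. \<bar>(T ^^ n) v y\<bar>) \<le> (\<Sum>\<^sub>\<infinity>y\<in>G. \<bar>v y\<bar>)"
proof (induction n)
  case 0 then show ?case by simp
next
  case (Suc n)
  then show ?case using T_nonexp[OF Tn_summable[OF Suc.prems, of n]] by simp
qed

lemma T_nonneg: "(\<And>y. y \<in> G \<Longrightarrow> v y \<ge> 0) \<Longrightarrow> y \<in> G \<Longrightarrow> T v y \<ge> 0"
  unfolding T_def by (rule app_nonneg[OF K_substoch])

lemma Tn_nonneg: "(\<And>y. y \<in> G \<Longrightarrow> v y \<ge> 0) \<Longrightarrow> y \<in> G \<Longrightarrow> (T ^^ n) v y \<ge> 0"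
proof (induction n arbitrary: y)
  case 0 then show ?case by simp
next
  case (Suc n) then show ?case by (simp add: T_nonneg)
qed

lemma T_cong: "(\<And>y. y \<in> G \<Longrightarrow> v y = u y) \<Longrightarrow> T v = T u"
  unfolding T_def by (rule app_cong)

lemma T_diff: "v summable_on G \<Longrightarrow> u summable_on G \<Longrightarrow> y \<in> G \<Longrightarrow> T (\<lambda>x. v x - u x) y = T v y - T u y"
  unfolding T_def by (rule app_diff[OF K_substoch])

lemma Tn_diff:
  assumes "v summable_on G" "u summable_on G" "y \<in> G"
  shows "(T ^^ n) (\<lambda>x. v x - u x) y = (T ^^ n) v y - (T ^^ n) u y"
  using assms(3)
proof (induction n arbitrary: y)
  case 0 then show ?case by simp
next
  case (Suc n)
  have "(T ^^ Suc n) (\<lambda>x. v x - u x) y = T (\<lambda>x. (T ^^ n) v x - (T ^^ n) u x) y"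
    using Suc.IH by (simp add: T_cong[of "(T ^^ n) (\<lambda>x. v x - u x)"])
  also have "\<dots> = (T ^^ Suc n) v y - (T ^^ Suc n) u y"
    using Suc.prems by (simp add: T_diff Tn_summable assms)
  finally show ?case .
qed

lemma Tn_Wp:
  assumes "v summable_on G" "y \<in> G"
  shows "(T ^^ n) v y = app G (Wp n) v y"
  using assms(2)
proof (induction n arbitrary: y)
  case 0
  have "app G (Wp 0) v y = (\<Sum>\<^sub>\<infinity>x\<in>G. if x = y then v x else 0)"
    unfolding app_def Wp_0 by (intro infsum_cong) auto
  also have "\<dots> = v y" using 0 by (subst infsum_cong_neutral[where T="{y}" and g=v]) auto
  finally show ?case by simp
next
  case (Suc n)
  have "T ((T ^^ n) v) = T (app G (Wp n) v)" by (rule T_cong) (rule Suc.IH)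
  then have "(T ^^ Suc n) v y = app G K (app G (Wp n) v) y"
    by (simp add: T_def)
  also have "\<dots> = app G (Wp (Suc n)) v y"
    unfolding Wp_Suc by (rule app_mmul[OF Wp_substoch K_substoch assms(1) Suc.prems])
  finally show ?case .
qed

lemma TN_contract:
  assumes d: "d summable_on G" and d0: "infsum d G = 0"
  shows "(\<Sum>\<^sub>\<infinity>y\<in>G. \<bar>(T ^^ N) d y\<bar>) \<le> rho * (\<Sum>\<^sub>\<infinity>y\<in>G. \<bar>d y\<bar>)"
proof -
  have "(\<Sum>\<^sub>\<infinity>y\<in>G. \<bar>(T ^^ N) d y\<bar>) = (\<Sum>\<^sub>\<infinity>y\<in>G. \<bar>app G (Wp N) d y\<bar>)"
    using Tn_Wp[OF d] by (intro infsum_cong) simp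
  also have "\<dots> \<le> (1 - eps) * (\<Sum>\<^sub>\<infinity>y\<in>G. \<bar>d y\<bar>)"
    using Wp_doeblin unfolding eps_def
    by (intro doeblin_contract[OF Wp_substoch o0_G _ d d0]) auto
  finally show ?thesis by (simp add: rho_def)
qed

lemma decay:
  assumes d: "d summable_on G" and d0: "infsum d G = 0"
  shows "(\<Sum>\<^sub>\<infinity>y\<in>G. \<bar>(T ^^ k) d y\<bar>) \<le> rho ^ (k div N) * (\<Sum>\<^sub>\<infinity>y\<in>G. \<bar>d y\<bar>)"
  using d d0
proof (induction k arbitrary: d rule: less_induct)
  case (less k)
  show ?case
  proof (cases "k < N")
    case True
    then show ?thesis using Tn_nonexp[OF less.prems(1)] by simp
  next
    case False
    define d' where "d' = (T ^^ N) d"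
    have s': "d' summable_on G" unfolding d'_def by (rule Tn_summable[OF less.prems(1)])
    have z': "infsum d' G = 0" unfolding d'_def using Tn_sum[OF less.prems(1)] less.prems(2) by simp
    have c': "(\<Sum>\<^sub>\<infinity>y\<in>G. \<bar>d' y\<bar>) \<le> rho * (\<Sum>\<^sub>\<infinity>y\<in>G. \<bar>d y\<bar>)"
      unfolding d'_def by (rule TN_contract[OF less.prems])
    have kk: "k = (k - N) + N" using False by simp
    have eq: "(T ^^ k) d = (T ^^ (k - N)) d'"
      unfolding d'_def by (subst kk) (simp add: funpow_add)
    have N0: "N > 0" using N2 by simp
    have "(\<Sum>\<^sub>\<infinity>y\<in>G. \<bar>(T ^^ (k - N)) d' y\<bar>) \<le> rho ^ ((k - N) div N) * (\<Sum>\<^sub>\<infinity>y\<in>G. \<bar>d' y\<bar>)"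
      using N0 False by (intro less.IH s' z') auto
    also have "\<dots> \<le> rho ^ ((k - N) div N) * (rho * (\<Sum>\<^sub>\<infinity>y\<in>G. \<bar>d y\<bar>))"
      using rho_pos c' by (intro mult_left_mono) auto
    also have "\<dots> = rho ^ (k div N) * (\<Sum>\<^sub>\<infinity>y\<in>G. \<bar>d y\<bar>)"
      using le_div_geq[OF N0, of k] False by simp
    finally show ?thesis unfolding eq .
  qed
qed

definition "delta0 y = (if y = o0 then 1 else (0::real))"
definition "u n = (T ^^ n) delta0"

lemma delta0_has_sum: "(delta0 has_sum 1) G"
  using o0_G by (intro has_sum_finite_neutralI[where B="{o0}"]) (auto simp: delta0_def)

lemma delta0_summable: "delta0 summable_on G"
  using delta0_has_sum by (auto simp: summable_on_def)

lemma u_summable: "u n summable_on G"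
  unfolding u_def by (rule Tn_summable[OF delta0_summable])

lemma u_sum: "infsum (u n) G = 1"
  unfolding u_def using Tn_sum[OF delta0_summable] delta0_has_sum by (simp add: infsumI)

lemma u_nonneg: "y \<in> G \<Longrightarrow> u n y \<ge> 0"
  unfolding u_def by (rule Tn_nonneg) (auto simp: delta0_def)

lemma dist_le2:
  fixes p q :: "int list \<Rightarrow> real"
  assumes "p summable_on G" "q summable_on G" "\<And>y. y \<in> G \<Longrightarrow> p y \<ge> 0" "\<And>y. y \<in> G \<Longrightarrow> q y \<ge> 0"
    "infsum p G = 1" "infsum q G = 1"
  shows "(\<Sum>\<^sub>\<infinity>y\<in>G. \<bar>p y - q y\<bar>) \<le> 2"
proof -
  have "(\<Sum>\<^sub>\<infinity>y\<in>G. \<bar>p y - q y\<bar>) \<le> (\<Sum>\<^sub>\<infinity>y\<in>G. p y + q y)"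
    using assms by (intro infsum_mono abs_summable_real summable_on_diff' summable_on_add) (auto simp: abs_le_iff)
  also have "\<dots> = 2" using assms by (simp add: infsum_add)
  finally show ?thesis .
qed

lemma u_cauchy:
  "(\<Sum>\<^sub>\<infinity>y\<in>G. \<bar>u (n + m) y - u n y\<bar>) \<le> 2 * rho ^ (n div N)"
proof -
  define d where "d y = u m y - delta0 y" for y
  have ds: "d summable_on G" unfolding d_def by (intro summable_on_diff' u_summable delta0_summable)
  have d0: "infsum d G = 0" unfolding d_def
    using u_summable delta0_summable u_sum delta0_has_sum by (simp add: infsum_diff' infsumI)
  have dn: "(\<Sum>\<^sub>\<infinity>y\<in>G. \<bar>d y\<bar>) \<le> 2" unfolding d_def
  proof (rule dist_le2[OF u_summable delta0_summable u_nonneg])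
    show "\<And>y. y \<in> G \<Longrightarrow> 0 \<le> delta0 y" by (simp add: delta0_def)
  qed (auto simp: u_sum infsumI[OF delta0_has_sum])
  have "(\<Sum>\<^sub>\<infinity>y\<in>G. \<bar>u (n + m) y - u n y\<bar>) = (\<Sum>\<^sub>\<infinity>y\<in>G. \<bar>(T ^^ n) d y\<bar>)"
  proof (intro infsum_cong)
    fix y assume y: "y \<in> G"
    have "(T ^^ n) d y = (T ^^ n) (u m) y - (T ^^ n) delta0 y"
      unfolding d_def by (rule Tn_diff[OF u_summable delta0_summable y])
    then show "\<bar>u (n + m) y - u n y\<bar> = \<bar>(T ^^ n) d y\<bar>"
      by (simp add: u_def funpow_add)
  qed
  also have "\<dots> \<le> rho ^ (n div N) * (\<Sum>\<^sub>\<infinity>y\<in>G. \<bar>d y\<bar>)" by (rule decay[OF ds d0])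
  also have "\<dots> \<le> rho ^ (n div N) * 2" using rho_pos dn by (intro mult_left_mono) auto
  finally show ?thesis by simp
qed

lemma rho_pow_mono: "q * N \<le> n \<Longrightarrow> rho ^ (n div N) \<le> rho ^ q"
proof -
  assume "q * N \<le> n"
  then have "q * N div N \<le> n div N" by (rule div_le_mono)
  then have "q \<le> n div N" using N2 by simp
  then show ?thesis using rho_pos rho_lt1 by (intro power_decreasing) auto
qed

lemma u_conv: assumes y: "y \<in> G" shows "convergent (\<lambda>n. u n y)"
proof -
  have "Cauchy (\<lambda>n. u n y)"
  proof (rule metric_CauchyI)
    fix e :: real assume e: "0 < e"
    obtain q where q: "rho ^ q < e / 2" using real_arch_pow_inv[of "e/2" rho] e rho_lt1 by auto
    have b: "\<bar>u m y - u n y\<bar> < e" if "n \<le> m" "q * N \<le> n" for m n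
    proof -
      have "\<bar>u m y - u n y\<bar> \<le> (\<Sum>\<^sub>\<infinity>x\<in>G. \<bar>u (n + (m - n)) x - u n x\<bar>)"
        using that single_le[OF summable_on_diff'[OF u_summable u_summable] y] by simp
      also have "\<dots> \<le> 2 * rho ^ (n div N)" by (rule u_cauchy)
      also have "\<dots> \<le> 2 * rho ^ q" using rho_pow_mono[OF that(2)] by simp
      finally show ?thesis using q by simp
    qed
    show "\<exists>M. \<forall>m\<ge>M. \<forall>n\<ge>M. dist (u m y) (u n y) < e"
    proof (intro exI allI impI)
      fix m n assume "q * N \<le> m" "q * N \<le> n"
      then show "dist (u m y) (u n y) < e"
        using b[of n m] b[of m n] by (cases "n \<le> m") (auto simp: dist_real_def abs_minus_commute)
    qed
  qed
  then show ?thesis by (simp add: Cauchy_convergent_iff)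
qed

definition "pst y = lim (\<lambda>n. u n y)"

lemma u_lim: "y \<in> G \<Longrightarrow> (\<lambda>n. u n y) \<longlonglongrightarrow> pst y"
  unfolding pst_def using u_conv by (simp add: convergent_LIMSEQ_iff)

lemma pi_nonneg: "y \<in> G \<Longrightarrow> pst y \<ge> 0"
proof -
  assume y: "y \<in> G"
  show "pst y \<ge> 0"
    by (rule LIMSEQ_le_const[OF u_lim[OF y]]) (use u_nonneg[OF y] in blast)
qed

lemma pi_close:
  shows "(\<lambda>y. \<bar>pst y - u n y\<bar>) summable_on G"
    and "(\<Sum>\<^sub>\<infinity>y\<in>G. \<bar>pst y - u n y\<bar>) \<le> 2 * rho ^ (n div N)"
proof -
  have fin: "sum (\<lambda>y. \<bar>pst y - u n y\<bar>) F \<le> 2 * rho ^ (n div N)" if F: "finite F" "F \<subseteq> G" for F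
  proof -
    have l1: "(\<lambda>m. \<bar>u (m + n) y - u n y\<bar>) \<longlonglongrightarrow> \<bar>pst y - u n y\<bar>" if y: "y \<in> F" for y
    proof -
      have yG: "y \<in> G" using y F by auto
      have "(\<lambda>m. u (m + n) y) \<longlonglongrightarrow> pst y"
        by (rule LIMSEQ_ignore_initial_segment[OF u_lim[OF yG]])
      then have "(\<lambda>m. u (m + n) y - u n y) \<longlonglongrightarrow> pst y - u n y"
        by (rule tendsto_diff) (rule tendsto_const)
      then show ?thesis by (rule tendsto_rabs)
    qed
    have lim: "(\<lambda>m. sum (\<lambda>y. \<bar>u (m + n) y - u n y\<bar>) F) \<longlonglongrightarrow> sum (\<lambda>y. \<bar>pst y - u n y\<bar>) F"
      by (rule tendsto_sum) (rule l1)
    have "sum (\<lambda>y. \<bar>u (m + n) y - u n y\<bar>) F \<le> 2 * rho ^ (n div N)" for m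
    proof -
      have mn: "m + n = n + m" by simp
      have "sum (\<lambda>y. \<bar>u (m + n) y - u n y\<bar>) F \<le> (\<Sum>\<^sub>\<infinity>y\<in>G. \<bar>u (m + n) y - u n y\<bar>)"
        using F by (intro finite_sum_le_infsum abs_summable_real summable_on_diff' u_summable) auto
      also have "\<dots> = (\<Sum>\<^sub>\<infinity>y\<in>G. \<bar>u (n + m) y - u n y\<bar>)" by (simp only: mn)
      also have "\<dots> \<le> 2 * rho ^ (n div N)" by (rule u_cauchy)
      finally show ?thesis .
    qed
    then show ?thesis by (intro LIMSEQ_le_const2[OF lim]) blast
  qed
  show s: "(\<lambda>y. \<bar>pst y - u n y\<bar>) summable_on G"
  proof (rule nonneg_bdd_above_summable_on)
    show "bdd_above (sum (\<lambda>y. \<bar>pst y - u n y\<bar>) ` {F. F \<subseteq> G \<and> finite F})"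
      by (rule bdd_aboveI2[where M="2 * rho ^ (n div N)"]) (use fin in blast)
  qed simp
  show "(\<Sum>\<^sub>\<infinity>y\<in>G. \<bar>pst y - u n y\<bar>) \<le> 2 * rho ^ (n div N)"
    by (rule infsum_le_finite_sums[OF s fin])
qed

lemma pi_diff_summable: "(\<lambda>y. pst y - u n y) summable_on G"
  by (rule summable_of_abs_real) (use pi_close(1)[of n] in simp)

lemma pi_summable: "pst summable_on G"
proof -
  have "(\<lambda>y. (pst y - u 0 y) + u 0 y) summable_on G"
    by (intro summable_on_add pi_diff_summable u_summable)
  then show ?thesis by simp
qed

lemma pi_sum: "infsum pst G = 1"
proof -
  have "infsum pst G - 1 = 0"
  proof (rule lim_zero[OF rho_lt1])
    fix q
    have "infsum pst G - 1 = (\<Sum>\<^sub>\<infinity>y\<in>G. pst y - u (q * N) y)"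
      using pi_summable u_summable u_sum by (simp add: infsum_diff')
    then have "\<bar>infsum pst G - 1\<bar> \<le> (\<Sum>\<^sub>\<infinity>y\<in>G. \<bar>pst y - u (q * N) y\<bar>)"
      using norm_infsum_bound[of "\<lambda>y. pst y - u (q * N) y" G] pi_close(1)[of "q * N"] by simp
    also have "\<dots> \<le> 2 * rho ^ q"
      using pi_close(2)[of "q * N"] N2 by simp
    finally show "\<bar>infsum pst G - 1\<bar> \<le> 2 * rho ^ q" .
  qed
  then show ?thesis by simp
qed

lemma pi_fixed: assumes y: "y \<in> G" shows "T pst y = pst y"
proof -
  have "T pst y - pst y = 0"
  proof (rule lim_zero[OF rho_lt1])
    fix q
    define n where "n = q * N"
    have "\<bar>T pst y - T (u n) y\<bar> = \<bar>T (\<lambda>x. pst x - u n x) y\<bar>"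
      using T_diff[OF pi_summable u_summable y] by simp
    also have "\<dots> \<le> (\<Sum>\<^sub>\<infinity>x\<in>G. \<bar>T (\<lambda>x. pst x - u n x) x\<bar>)"
      by (rule single_le[OF T_summable[OF pi_diff_summable] y])
    also have "\<dots> \<le> (\<Sum>\<^sub>\<infinity>x\<in>G. \<bar>pst x - u n x\<bar>)"
      by (rule T_nonexp[OF pi_diff_summable])
    also have "\<dots> \<le> 2 * rho ^ q" using pi_close(2)[of n] N2 by (simp add: n_def)
    finally have a: "\<bar>T pst y - T (u n) y\<bar> \<le> 2 * rho ^ q" .
    have "\<bar>u (Suc n) y - pst y\<bar> \<le> (\<Sum>\<^sub>\<infinity>x\<in>G. \<bar>pst x - u (Suc n) x\<bar>)"
      using single_le[OF pi_diff_summable y, of "Suc n"] by (simp add: abs_minus_commute)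
    also have "\<dots> \<le> 2 * rho ^ (Suc n div N)" by (rule pi_close(2))
    also have "\<dots> \<le> 2 * rho ^ q" using rho_pow_mono[of q "Suc n"] by (simp add: n_def)
    finally have b: "\<bar>u (Suc n) y - pst y\<bar> \<le> 2 * rho ^ q" .
    have "T (u n) = u (Suc n)" by (simp add: u_def)
    then show "\<bar>T pst y - pst y\<bar> \<le> 4 * rho ^ q" using a b by simp
  qed
  then show ?thesis by simp
qed

lemma Tn_pi: "y \<in> G \<Longrightarrow> (T ^^ n) pst y = pst y"
proof (induction n arbitrary: y)
  case 0 then show ?case by simp
next
  case (Suc n)
  have "T ((T ^^ n) pst) = T pst" by (rule T_cong) (rule Suc.IH)
  then show ?case using pi_fixed[OF Suc.prems] by simp
qed

end


context model
begin

lemma law_has_sum: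
  assumes t: "t \<ge> 0" and p: "p summable_on G" and pn: "\<And>y. y \<in> G \<Longrightarrow> p y \<ge> 0" and y': "y' \<in> G"
  shows "((\<lambda>k. wt t k * app G (Wp k) p y') has_sum law N \<alpha> \<beta> \<mu> t p y') UNIV"
proof -
  define f where "f = (\<lambda>(y,k). p y * (wt t k * Wp k y y'))"
  have inner: "((\<lambda>k. f (y,k)) has_sum p y * Pt N \<alpha> \<beta> \<mu> t y y') UNIV" if y: "y \<in> G" for y
    unfolding f_def using has_sum_cmult_right[OF Pt_has_sum[OF t y y'], of "p y"] by simp
  have gs: "(\<lambda>y. p y * Pt N \<alpha> \<beta> \<mu> t y y') summable_on G"
  proof (rule summable_on_comparison_test[OF p])
    fix y assume y: "y \<in> G"
    show "p y * Pt N \<alpha> \<beta> \<mu> t y y' \<le> p y"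
      using pn[OF y] Pt_le1[OF t y y'] by (simp add: mult_left_le)
    show "0 \<le> p y * Pt N \<alpha> \<beta> \<mu> t y y'"
      using pn[OF y] Pt_nonneg[OF t y y'] by simp
  qed
  have fs: "f summable_on Sigma G (\<lambda>_. UNIV)"
    using inner gs pn wt_nonneg[OF t] Wp_nonneg[OF _ y']
    by (intro summable_on_SigmaI[OF inner gs]) (auto simp: f_def)
  have gh: "((\<lambda>y. p y * Pt N \<alpha> \<beta> \<mu> t y y') has_sum law N \<alpha> \<beta> \<mu> t p y') G"
    unfolding law_def using gs by simp
  have fh: "(f has_sum law N \<alpha> \<beta> \<mu> t p y') (G \<times> UNIV)"
    by (rule has_sum_SigmaI[OF inner gh fs])
  have fh': "((\<lambda>(k,y). f (y,k)) has_sum law N \<alpha> \<beta> \<mu> t p y') (UNIV \<times> G)"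
    using fh by (subst (asm) has_sum_swap)
  have inner2: "((\<lambda>y. (\<lambda>(k,y). f (y,k)) (k, y)) has_sum wt t k * app G (Wp k) p y') G" for k
  proof -
    have "(\<lambda>y. p y * Wp k y y') summable_on G"
      by (rule col_summable[OF Wp_substoch p y'])
    then have "((\<lambda>y. p y * Wp k y y') has_sum app G (Wp k) p y') G"
      by (simp add: app_def)
    from has_sum_cmult_right[OF this, of "wt t k"] show ?thesis
      by (simp add: f_def algebra_simps)
  qed
  show ?thesis by (rule has_sum_Sigma'[OF fh' inner2])
qed

lemma law_pi: assumes t: "t \<ge> 0" and y': "y' \<in> G" shows "law N \<alpha> \<beta> \<mu> t pst y' = pst y'"
proof -
  have h1: "((\<lambda>k. wt t k * app G (Wp k) pst y') has_sum law N \<alpha> \<beta> \<mu> t pst y') UNIV"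
    by (rule law_has_sum[OF t pi_summable pi_nonneg y'])
  have "app G (Wp k) pst y' = pst y'" for k
    using Tn_Wp[OF pi_summable y', of k] Tn_pi[OF y', of k] by simp
  then have h1': "((\<lambda>k. wt t k * pst y') has_sum law N \<alpha> \<beta> \<mu> t pst y') UNIV"
    using h1 by simp
  have h2: "((\<lambda>k. wt t k * pst y') has_sum (1 * pst y')) UNIV"
    by (rule has_sum_cmult_left[OF wt_has_sum[OF t]])
  show ?thesis using has_sum_unique[OF h1' h2] by simp
qed

definition "th = rho powr (1 / real N)"
definition "C1 = 2 / rho"
definition "C2 = Lam * (1 - th)"

lemma th_pos: "th > 0" using rho_pos by (simp add: th_def)
lemma th_lt1: "th < 1" using rho_pos rho_lt1 N2 by (simp add: th_def powr01_less_one)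
lemma C1_pos: "C1 > 0" using rho_pos by (simp add: C1_def)
lemma C2_pos: "C2 > 0" using th_lt1 Lam_pos by (simp add: C2_def)

lemma rho_pow_bound: "rho ^ (k div N) \<le> th ^ k / rho"
proof -
  have N0: "N > 0" using N2 by simp
  have "k mod N < N" by (rule mod_less_divisor[OF N0])
  moreover have "k div N * N + k mod N = k" by (rule div_mult_mod_eq)
  ultimately have "k < Suc (k div N) * N" by (simp only: mult_Suc)
  then have "real k < real (Suc (k div N)) * real N" by (metis of_nat_less_iff of_nat_mult)
  then have le: "real k * (1 / real N) \<le> real (Suc (k div N))" using N0 by (simp add: field_simps)
  have "th ^ k = rho powr (real k * (1 / real N))"
    unfolding th_def using rho_pos by (simp add: powr_power)
  moreover have "rho powr real (Suc (k div N)) \<le> rho powr (real k * (1 / real N))"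
    using le rho_pos rho_lt1 by (intro powr_mono') auto
  moreover have "rho powr real (Suc (k div N)) = rho ^ (k div N) * rho"
    using powr_realpow[OF rho_pos, of "Suc (k div N)"] by (simp add: mult.commute)
  ultimately have "rho ^ (k div N) * rho \<le> th ^ k" by simp
  then show ?thesis using rho_pos by (simp add: field_simps)
qed

lemma conv:
  assumes t: "t \<ge> 0" and p: "is_distr N p"
  shows "(\<lambda>y. \<bar>law N \<alpha> \<beta> \<mu> t p y - pst y\<bar>) summable_on G"
    and "(\<Sum>\<^sub>\<infinity>y\<in>G. \<bar>law N \<alpha> \<beta> \<mu> t p y - pst y\<bar>) \<le> C1 * exp (- C2 * t)"
proof -
  have pn: "\<And>y. y \<in> G \<Longrightarrow> p y \<ge> 0" and ph: "(p has_sum 1) G" using p by (auto simp: is_distr_def)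
  have ps: "p summable_on G" using ph by (auto simp: summable_on_def)
  have p1: "infsum p G = 1" using ph by (simp add: infsumI)
  define d where "d y = p y - pst y" for y
  have ds: "d summable_on G" unfolding d_def by (intro summable_on_diff' ps pi_summable)
  have d0: "infsum d G = 0" unfolding d_def using ps pi_summable p1 pi_sum by (simp add: infsum_diff')
  have dn: "(\<Sum>\<^sub>\<infinity>y\<in>G. \<bar>d y\<bar>) \<le> 2" unfolding d_def
    by (rule dist_le2[OF ps pi_summable pn pi_nonneg p1 pi_sum])
  define D where "D k y' = app G (Wp k) p y' - pst y'" for k y'
  have DT: "D k y' = (T ^^ k) d y'" if y': "y' \<in> G" for k y'
    unfolding D_def d_def using Tn_diff[OF ps pi_summable y', of k] Tn_Wp[OF ps y', of k] Tn_pi[OF y', of k]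
    by simp
  have DS: "D k summable_on G" for k
    using Tn_summable[OF ds, of k] DT by (subst summable_on_cong) auto
  have DN: "(\<Sum>\<^sub>\<infinity>y\<in>G. \<bar>D k y\<bar>) \<le> 2 * rho ^ (k div N)" for k
  proof -
    have "(\<Sum>\<^sub>\<infinity>y\<in>G. \<bar>D k y\<bar>) = (\<Sum>\<^sub>\<infinity>y\<in>G. \<bar>(T ^^ k) d y\<bar>)"
      using DT by (intro infsum_cong) auto
    also have "\<dots> \<le> rho ^ (k div N) * (\<Sum>\<^sub>\<infinity>y\<in>G. \<bar>d y\<bar>)" by (rule decay[OF ds d0])
    also have "\<dots> \<le> rho ^ (k div N) * 2" using rho_pos dn by (intro mult_left_mono) auto
    finally show ?thesis by simp
  qed
  have rp: "rho ^ (k div N) \<le> 1" for k using rho_pos rho_lt1 by (simp add: power_le_one)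
  have Dpt: "\<bar>D k y'\<bar> \<le> 2" if y': "y' \<in> G" for k y'
  proof -
    have "\<bar>D k y'\<bar> \<le> (\<Sum>\<^sub>\<infinity>y\<in>G. \<bar>D k y\<bar>)" by (rule single_le[OF DS y'])
    also have "\<dots> \<le> 2 * rho ^ (k div N)" by (rule DN)
    also have "\<dots> \<le> 2" using rp[of k] by simp
    finally show ?thesis .
  qed
  have LH: "((\<lambda>k. wt t k * D k y') has_sum (law N \<alpha> \<beta> \<mu> t p y' - pst y')) UNIV" if y': "y' \<in> G" for y'
  proof -
    have "((\<lambda>k. wt t k * app G (Wp k) p y' - wt t k * pst y') has_sum (law N \<alpha> \<beta> \<mu> t p y' - 1 * pst y')) UNIV"
      by (intro has_sum_diff' law_has_sum[OF t ps pn y'] has_sum_cmult_left wt_has_sum[OF t])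
    then show ?thesis by (simp add: D_def right_diff_distrib)
  qed
  define h where "h = (\<lambda>(k, y'). wt t k * \<bar>D k y'\<bar>)"
  define g where "g k = wt t k * (C1 * th ^ k)" for k
  have gh: "(g has_sum C1 * (exp (-(Lam*t)) * exp (Lam*t*th))) UNIV"
  proof -
    have "(\<lambda>k. C1 * (exp (-(Lam*t)) * ((Lam*t*th)^k / fact k))) sums (C1 * (exp (-(Lam*t)) * exp (Lam*t*th)))"
      by (intro sums_mult exp_sums)
    then have "g sums (C1 * (exp (-(Lam*t)) * exp (Lam*t*th)))"
      unfolding g_def wt_def by (simp add: power_mult_distrib algebra_simps)
    then show ?thesis using wt_nonneg[OF t] C1_pos th_pos unfolding g_def by (intro sums_nonneg_imp_has_sum) auto
  qed
  have hk: "wt t k * (\<Sum>\<^sub>\<infinity>y\<in>G. \<bar>D k y\<bar>) \<le> g k" for k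
  proof -
    have "(\<Sum>\<^sub>\<infinity>y\<in>G. \<bar>D k y\<bar>) \<le> 2 * (th ^ k / rho)"
      using DN[of k] rho_pow_bound[of k] by linarith
    also have "\<dots> = C1 * th ^ k" by (simp add: C1_def)
    finally show ?thesis unfolding g_def using wt_nonneg[OF t] by (intro mult_left_mono) auto
  qed
  have hin: "((\<lambda>y'. h (k, y')) has_sum wt t k * (\<Sum>\<^sub>\<infinity>y\<in>G. \<bar>D k y\<bar>)) G" for k
    unfolding h_def using has_sum_cmult_right[OF has_sum_infsum[OF abs_summable_real[OF DS]]] by simp
  have hout: "(\<lambda>k. wt t k * (\<Sum>\<^sub>\<infinity>y\<in>G. \<bar>D k y\<bar>)) summable_on UNIV"
  proof (rule summable_on_comparison_test[of g])
    show "g summable_on UNIV" using gh by (auto simp: summable_on_def)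
  qed (use hk wt_nonneg[OF t] in \<open>auto intro!: mult_nonneg_nonneg infsum_nonneg\<close>)
  have hS: "h summable_on UNIV \<times> G"
    using wt_nonneg[OF t] by (intro summable_on_SigmaI[OF hin hout]) (auto simp: h_def)
  have hS': "(\<lambda>(y', k). h (k, y')) summable_on G \<times> UNIV"
    using hS by (subst (asm) summable_on_swap) (simp add: case_prod_unfold)
  have Hs: "(\<lambda>y'. \<Sum>\<^sub>\<infinity>k. h (k, y')) summable_on G"
    using summable_on_Sigma_banach[where f="\<lambda>y' k. h (k, y')" and A=G and B="\<lambda>_. UNIV"] hS' by simp
  have HI: "(\<Sum>\<^sub>\<infinity>y'\<in>G. \<Sum>\<^sub>\<infinity>k. h (k, y')) = (\<Sum>\<^sub>\<infinity>k. \<Sum>\<^sub>\<infinity>y'\<in>G. h (k, y'))"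
    using hS' by (intro infsum_swap_banach) simp
  have pt: "\<bar>law N \<alpha> \<beta> \<mu> t p y' - pst y'\<bar> \<le> (\<Sum>\<^sub>\<infinity>k. h (k, y'))" if y': "y' \<in> G" for y'
  proof -
    have "(\<lambda>k. h (k, y')) summable_on UNIV"
    proof (rule summable_on_comparison_test[of "\<lambda>k. wt t k * 2"])
      show "(\<lambda>k. wt t k * 2) summable_on UNIV"
        using has_sum_cmult_left[OF wt_has_sum[OF t]] by (auto simp: summable_on_def)
      show "h (k, y') \<le> wt t k * 2" for k
        unfolding h_def using Dpt[OF y', of k] wt_nonneg[OF t] by (simp add: mult_left_mono)
      show "0 \<le> h (k, y')" for k unfolding h_def using wt_nonneg[OF t] by simp
    qed
    then have hh: "((\<lambda>k. h (k, y')) has_sum (\<Sum>\<^sub>\<infinity>k. h (k, y'))) UNIV" by simp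
    show ?thesis
      using norm_infsum_le[OF LH[OF y'] hh] wt_nonneg[OF t] by (simp add: h_def abs_mult)
  qed
  show s: "(\<lambda>y. \<bar>law N \<alpha> \<beta> \<mu> t p y - pst y\<bar>) summable_on G"
    by (rule summable_on_comparison_test[OF Hs]) (use pt in auto)
  have "(\<Sum>\<^sub>\<infinity>y\<in>G. \<bar>law N \<alpha> \<beta> \<mu> t p y - pst y\<bar>) \<le> (\<Sum>\<^sub>\<infinity>y'\<in>G. \<Sum>\<^sub>\<infinity>k. h (k, y'))"
    using pt by (intro infsum_mono s Hs)
  also have "\<dots> = (\<Sum>\<^sub>\<infinity>k. wt t k * (\<Sum>\<^sub>\<infinity>y\<in>G. \<bar>D k y\<bar>))"
    unfolding HI by (intro infsum_cong) (rule infsumI[OF hin])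
  also have "\<dots> \<le> infsum g UNIV"
    using hk gh hout by (intro infsum_mono) (auto simp: summable_on_def)
  also have "\<dots> = C1 * (exp (-(Lam*t)) * exp (Lam*t*th))" using gh by (simp add: infsumI)
  also have "\<dots> = C1 * exp (- C2 * t)"
    by (simp add: C2_def exp_add[symmetric] algebra_simps)
  finally show "(\<Sum>\<^sub>\<infinity>y\<in>G. \<bar>law N \<alpha> \<beta> \<mu> t p y - pst y\<bar>) \<le> C1 * exp (- C2 * t)" .
qed

end


theorem theorem2:
  fixes N :: nat and \<alpha> \<beta> \<mu> :: real
  assumes "\<alpha> > 0" and "\<beta> > 0" and "\<mu> > 0" and "N \<ge> 2"
  shows "\<exists>\<pi>. stationary N \<alpha> \<beta> \<mu> \<pi>
          \<and> (\<forall>\<sigma>. stationary N \<alpha> \<beta> \<mu> \<sigma> \<longrightarrow> (\<forall>y\<in>Gamma N. \<sigma> y = \<pi> y))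
          \<and> (\<exists>C1>0. \<exists>C2>0. \<forall>t\<ge>0. \<forall>p. is_distr N p \<longrightarrow>
                ((\<lambda>y. \<bar>law N \<alpha> \<beta> \<mu> t p y - \<pi> y\<bar>) summable_on Gamma N)
              \<and> (\<Sum>\<^sub>\<infinity>y\<in>Gamma N. \<bar>law N \<alpha> \<beta> \<mu> t p y - \<pi> y\<bar>) \<le> C1 * exp (- C2 * t))"
proof -
  interpret M: model N \<alpha> \<beta> \<mu> using assms by unfold_locales auto
  have dist: "is_distr N M.pst"
    unfolding is_distr_def using M.pi_nonneg has_sum_infsum[OF M.pi_summable] M.pi_sum by auto
  have stat: "stationary N \<alpha> \<beta> \<mu> M.pst"
    unfolding stationary_def using dist M.law_pi by auto
  have uniq: "\<forall>\<sigma>. stationary N \<alpha> \<beta> \<mu> \<sigma> \<longrightarrow> (\<forall>y\<in>Gamma N. \<sigma> y = M.pst y)"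
  proof (intro allI impI ballI)
    fix \<sigma> y assume s: "stationary N \<alpha> \<beta> \<mu> \<sigma>" and y: "y \<in> Gamma N"
    have sd: "is_distr N \<sigma>" and sl: "\<And>t. t \<ge> 0 \<Longrightarrow> law N \<alpha> \<beta> \<mu> t \<sigma> y = \<sigma> y"
      using s y by (auto simp: stationary_def)
    have "\<sigma> y - M.pst y = 0"
    proof (rule lim_zero[of "exp (- M.C2)"])
      show "exp (- M.C2) < 1" using M.C2_pos by simp
    next
      fix q :: nat
      have t0: "real q \<ge> 0" by simp
      have "\<bar>\<sigma> y - M.pst y\<bar> = \<bar>law N \<alpha> \<beta> \<mu> (real q) \<sigma> y - M.pst y\<bar>" using sl[OF t0] by simp
      also have "\<dots> \<le> (\<Sum>\<^sub>\<infinity>x\<in>Gamma N. \<bar>law N \<alpha> \<beta> \<mu> (real q) \<sigma> x - M.pst x\<bar>)"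
        using single_le[OF summable_of_abs_real[OF _] y, of "\<lambda>x. law N \<alpha> \<beta> \<mu> (real q) \<sigma> x - M.pst x"]
          M.conv(1)[OF t0 sd] by simp
      also have "\<dots> \<le> M.C1 * exp (- M.C2 * real q)" by (rule M.conv(2)[OF t0 sd])
      also have "exp (- M.C2 * real q) = exp (- M.C2) ^ q"
        using exp_of_nat_mult[of q "- M.C2"] by (simp add: mult.commute)
      finally show "\<bar>\<sigma> y - M.pst y\<bar> \<le> M.C1 * exp (- M.C2) ^ q" .
    qed
    then show "\<sigma> y = M.pst y" by simp
  qed
  have cv: "\<forall>t\<ge>0. \<forall>p. is_distr N p \<longrightarrow>
                ((\<lambda>y. \<bar>law N \<alpha> \<beta> \<mu> t p y - M.pst y\<bar>) summable_on Gamma N)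
              \<and> (\<Sum>\<^sub>\<infinity>y\<in>Gamma N. \<bar>law N \<alpha> \<beta> \<mu> t p y - M.pst y\<bar>) \<le> M.C1 * exp (- M.C2 * t)"
    using M.conv by blast
  show ?thesis
    using stat uniq cv M.C1_pos M.C2_pos by blast
qed

end
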